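(* Let $G \subset \mathrm{Diff}^1_+(\mathbb{S}^2)$ be a group with $\mathrm{M\ddot{o}b}(\mathbb{S}^2)\subsetneq G$. Then there exist $\hat g\in G_2$ and $0<\lambda<1$ such that $D\hat g(\mathbf{0})=\mathrm{diag}(\lambda,\lambda^{-1})$ with respect to the canonical basis $\{\partial/\partial x,\partial/\partial y\}$ of $T_{\mathbf{0}}\mathbb{S}^2$; in particular $\mathbf{0}$ is a hyperbolic saddle fixed point of $\hat g$.
   Context: $\mathbb{S}^2$ is identified with $\mathbb{C}\cup\{\infty\}$ by stereographic projection from the North Pole $\mathbf{\infty}$; $\mathbf{0}$ is the South Pole (the origin of $\mathbb{C}$), and $T_{\mathbf{0}}\mathbb{S}^2$ is identified with $\mathbb{R}^2=\mathbb{C}$ with canonical basis $\{\partial/\partial x,\partial/\partial y\}$. $\mathrm{Diff}^1_+(\mathbb{S}^2)$ is the group of orientation-preserving $C^1$ diffeomorphisms; $\mathrm{M\ddot{o}b}(\mathbb{S}^2)$ is the group of maps $z\mapsto (az+b)/(cz+d)$, $ad-bc=1$. $G_2=\{g\in G: g(\mathbf{0})=\mathbf{0},\ g(\mathbf{\infty})=\mathbf{\infty}\}$. *)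

theory Defs
  imports "HOL-Analysis.Analysis"
begin

text \<open>The sphere S^2 is modelled as the Riemann sphere: the type complex option,
  where Some z is the point of C (via stereographic projection from the North Pole)
  and None is the North Pole infinity. The South Pole 0 is Some 0.\<close>

type_synonym sphere = "complex option"

text \<open>The two standard parametrisations (inverse charts), each defined on all of C:
  param True = z gives Some z (image: S^2 minus infinity),
  param False = w gives 1/w, with 0 going to infinity (image: S^2 minus 0).\<close>

definition param :: "bool \<Rightarrow> complex \<Rightarrow> sphere" where
  "param b w = (if b then Some w else (if w = 0 then None else Some (inverse w)))"

text \<open>The corresponding charts (only meaningful on the image of param b).\<close>

definition chart :: "bool \<Rightarrow> sphere \<Rightarrow> complex" where
  "chart b p = (case p of None \<Rightarrow> 0 | Some z \<Rightarrow> (if b then z else inverse z))"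

definition sphere_open :: "sphere set \<Rightarrow> bool" where
  "sphere_open S \<longleftrightarrow> (\<forall>b. open (param b -` S))"

definition sphere_continuous :: "(sphere \<Rightarrow> sphere) \<Rightarrow> bool" where
  "sphere_continuous f \<longleftrightarrow> (\<forall>S. sphere_open S \<longrightarrow> sphere_open (f -` S))"

definition local_rep :: "(sphere \<Rightarrow> sphere) \<Rightarrow> bool \<Rightarrow> bool \<Rightarrow> complex \<Rightarrow> complex" where
  "local_rep f b1 b2 = (\<lambda>w. chart b2 (f (param b1 w)))"

definition local_dom :: "(sphere \<Rightarrow> sphere) \<Rightarrow> bool \<Rightarrow> bool \<Rightarrow> complex set" where
  "local_dom f b1 b2 = {w. f (param b1 w) \<in> range (param b2)}"

definition C1_on :: "complex set \<Rightarrow> (complex \<Rightarrow> complex) \<Rightarrow> bool" where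
  "C1_on W g \<longleftrightarrow> (\<exists>D :: complex \<Rightarrow> (complex \<Rightarrow>\<^sub>L complex).
      (\<forall>w\<in>W. (g has_derivative blinfun_apply (D w)) (at w)) \<and> continuous_on W D)"

text \<open>Determinant of a real-linear map C to C w.r.t. the basis 1, i (i.e. d/dx, d/dy).\<close>

definition real_det :: "(complex \<Rightarrow> complex) \<Rightarrow> real" where
  "real_det L = Re (L 1) * Im (L \<i>) - Im (L 1) * Re (L \<i>)"

definition sphere_C1 :: "(sphere \<Rightarrow> sphere) \<Rightarrow> bool" where
  "sphere_C1 f \<longleftrightarrow> sphere_continuous f \<and>
     (\<forall>b1 b2. C1_on (local_dom f b1 b2) (local_rep f b1 b2))"

definition Diff1_plus :: "(sphere \<Rightarrow> sphere) set" where
  "Diff1_plus = {f. bij f \<and> sphere_C1 f \<and> sphere_C1 (inv f) \<and>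
     (\<forall>b1 b2. \<forall>w\<in>local_dom f b1 b2. \<forall>L.
        (local_rep f b1 b2 has_derivative L) (at w) \<longrightarrow> real_det L > 0)}"

definition mobius :: "complex \<Rightarrow> complex \<Rightarrow> complex \<Rightarrow> complex \<Rightarrow> sphere \<Rightarrow> sphere" where
  "mobius a b c d p = (case p of
      None \<Rightarrow> (if c = 0 then None else Some (a / c))
    | Some z \<Rightarrow> (if c * z + d = 0 then None else Some ((a * z + b) / (c * z + d))))"

definition Mob :: "(sphere \<Rightarrow> sphere) set" where
  "Mob = {mobius a b c d | a b c d. a * d - b * c = 1}"

definition diff_subgroup :: "(sphere \<Rightarrow> sphere) set \<Rightarrow> bool" where
  "diff_subgroup G \<longleftrightarrow> G \<subseteq> Diff1_plus \<and> id \<in> G \<and>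
     (\<forall>f\<in>G. \<forall>g\<in>G. f \<circ> g \<in> G) \<and> (\<forall>f\<in>G. inv f \<in> G)"

definition G2 :: "(sphere \<Rightarrow> sphere) set \<Rightarrow> (sphere \<Rightarrow> sphere) set" where
  "G2 G = {g\<in>G. g (Some 0) = Some 0 \<and> g None = None}"

end

theory Submission
  imports Defs "HOL-Complex_Analysis.Complex_Analysis"
begin

lemma mobius_Some: "mobius a b c d (Some z) = (if c * z + d = 0 then None else Some ((a * z + b) / (c * z + d)))"
  by (simp add: mobius_def)
lemma mobius_None: "mobius a b c d None = (if c = 0 then None else Some (a / c))"
  by (simp add: mobius_def)

lemma mobius_comp:
  assumes det: "a'*d' - b'*c' = 1"
  shows "mobius a b c d (mobius a' b' c' d' x) =
         mobius (a*a'+b*c') (a*b'+b*d') (c*a'+d*c') (c*b'+d*d') x"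
proof (cases x)
  case None
  show ?thesis
  proof (cases "c' = 0")
    case True
    then have "a' \<noteq> 0" using det by auto
    then show ?thesis using None True by (simp add: mobius_Some mobius_None)
  next
    case False
    have e1: "a * (a'/c') + b = (a*a'+b*c')/c'" and e2: "c*(a'/c')+d = (c*a'+d*c')/c'"
      using False by (simp_all add: field_simps)
    have "mobius a b c d (mobius a' b' c' d' x) = mobius a b c d (Some (a'/c'))"
      using None False by (simp add: mobius_None)
    also have "\<dots> = (if (c*a'+d*c')/c' = 0 then None else Some (((a*a'+b*c')/c') / ((c*a'+d*c')/c')))"
      by (simp only: mobius_Some e1 e2)
    also have "\<dots> = mobius (a*a'+b*c') (a*b'+b*d') (c*a'+d*c') (c*b'+d*d') x"
      using None False by (simp add: mobius_None)
    finally show ?thesis .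
  qed
next
  case (Some z)
  show ?thesis
  proof (cases "c' * z + d' = 0")
    case True
    have nz: "a' * z + b' \<noteq> 0"
    proof
      assume h: "a' * z + b' = 0"
      have "a'*d' - b'*c' = a' * (c'*z+d') - (a'*z+b')*c'" by (simp add: algebra_simps)
      then show False using h True det by simp
    qed
    have den: "(c*a'+d*c') * z + (c*b'+d*d') = c * (a'*z+b')"
    proof -
      have "(c*a'+d*c') * z + (c*b'+d*d') = c * (a'*z+b') + d * (c'*z+d')" by (simp add: algebra_simps)
      then show ?thesis using True by simp
    qed
    have num: "(a*a'+b*c') * z + (a*b'+b*d') = a * (a'*z+b')"
    proof -
      have "(a*a'+b*c') * z + (a*b'+b*d') = a * (a'*z+b') + b * (c'*z+d')" by (simp add: algebra_simps)
      then show ?thesis using True by simp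
    qed
    show ?thesis using Some True nz by (simp add: mobius_Some mobius_None den num)
  next
    case False
    define w where "w = (a' * z + b') / (c' * z + d')"
    have den: "c * w + d = ((c*a'+d*c') * z + (c*b'+d*d')) / (c' * z + d')"
      using False by (simp add: w_def field_simps)
    have num: "a * w + b = ((a*a'+b*c') * z + (a*b'+b*d')) / (c' * z + d')"
      using False by (simp add: w_def field_simps)
    show ?thesis using Some False
      by (simp add: mobius_Some mobius_None w_def[symmetric] den num)
  qed
qed

lemma mobius_id: "mobius 1 0 0 1 = id"
  by (rule ext) (simp add: mobius_def split: option.splits)

lemma Mob_comp: "f \<in> Mob \<Longrightarrow> g \<in> Mob \<Longrightarrow> f \<circ> g \<in> Mob"
proof -
  assume "f \<in> Mob" "g \<in> Mob"
  then obtain a b c d a' b' c' d' where f: "f = mobius a b c d" "a*d-b*c = 1"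
    and g: "g = mobius a' b' c' d'" "a'*d'-b'*c' = 1" unfolding Mob_def by blast
  have "f \<circ> g = mobius (a*a'+b*c') (a*b'+b*d') (c*a'+d*c') (c*b'+d*d')"
    using f g by (auto simp: mobius_comp)
  moreover have "(a*a'+b*c')*(c*b'+d*d') - (a*b'+b*d')*(c*a'+d*c') = 1"
  proof -
    have "(a*a'+b*c')*(c*b'+d*d') - (a*b'+b*d')*(c*a'+d*c') = (a*d-b*c)*(a'*d'-b'*c')"
      by (simp add: algebra_simps)
    then show ?thesis using f g by simp
  qed
  ultimately show ?thesis unfolding Mob_def by blast
qed

lemma Mob_cancel: assumes "T \<in> Mob" "T \<circ> f \<in> Mob" shows "f \<in> Mob"
proof -
  obtain a b c d where T: "T = mobius a b c d" "a*d-b*c = 1" using assms(1) unfolding Mob_def by blast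
  have Ti: "mobius d (-b) (-c) a \<in> Mob" unfolding Mob_def
    apply (rule CollectI, rule exI[of _ d], rule exI[of _ "-b"], rule exI[of _ "-c"], rule exI[of _ a])
    using T(2) by (simp add: algebra_simps)
  have "mobius d (-b) (-c) a \<circ> T = id"
  proof
    fix x
    have "(mobius d (-b) (-c) a \<circ> T) x = mobius (d*a+(-b)*c) (d*b+(-b)*d) ((-c)*a+a*c) ((-c)*b+a*d) x"
      using T by (simp add: mobius_comp)
    also have "\<dots> = mobius 1 0 0 1 x" using T(2) by (simp add: algebra_simps)
    finally show "(mobius d (-b) (-c) a \<circ> T) x = id x" by (simp add: mobius_id)
  qed
  then have "f = mobius d (-b) (-c) a \<circ> (T \<circ> f)" by (metis comp_assoc id_comp)
  then show ?thesis using Mob_comp[OF Ti assms(2)] by simp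
qed

lemma Mob_normalize:
  assumes "x \<noteq> y" shows "\<exists>T\<in>Mob. T x = None \<and> T y = Some 0"
proof (cases x)
  case None
  then obtain r where y: "y = Some r" using assms by (cases y) auto
  have "mobius 1 (-r) 0 1 \<in> Mob" unfolding Mob_def by force
  then show ?thesis using None y by (intro bexI[of _ "mobius 1 (-r) 0 1"]) (auto simp: mobius_def)
next
  case (Some p)
  show ?thesis
  proof (cases y)
    case None
    have "mobius 0 (-1) 1 (-p) \<in> Mob" unfolding Mob_def by force
    then show ?thesis using None Some by (intro bexI[of _ "mobius 0 (-1) 1 (-p)"]) (auto simp: mobius_def)
  next
    case (Some r)
    have rp: "r - p \<noteq> 0" using assms \<open>x = Some p\<close> \<open>y = Some r\<close> by auto
    define q where "q = 1 / (r - p)"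
    have "mobius 1 (-r) q (-q*p) \<in> Mob" unfolding Mob_def
      apply (rule CollectI, rule exI[of _ 1], rule exI[of _ "-r"], rule exI[of _ q], rule exI[of _ "-q*p"])
    proof -
      have "1 * (-q*p) - (-r)*q = q*(r-p)" by (simp add: algebra_simps)
      also have "\<dots> = 1" using rp by (simp add: q_def)
      finally show "mobius 1 (-r) q (-q*p) = mobius 1 (-r) q (-q*p) \<and> 1 * (-q*p) - (-r)*q = 1" by simp
    qed
    moreover have "q * r + - q * p \<noteq> 0"
    proof -
      have "q * r + - q * p = q*(r-p)" by (simp add: algebra_simps)
      also have "\<dots> = 1" using rp by (simp add: q_def)
      finally show ?thesis by simp
    qed
    ultimately show ?thesis using Some \<open>x = Some p\<close>
      by (intro bexI[of _ "mobius 1 (-r) q (-q*p)"]) (auto simp: mobius_def)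
  qed
qed


lemma rep_TT: "local_rep g True True w = (case g (Some w) of None \<Rightarrow> 0 | Some z \<Rightarrow> z)"
  by (simp add: local_rep_def chart_def param_def split: option.splits)

definition smul :: "complex \<Rightarrow> sphere \<Rightarrow> sphere" where
  "smul u = mobius (csqrt u) 0 0 (inverse (csqrt u))"

lemma smul_Some: "u \<noteq> 0 \<Longrightarrow> smul u (Some z) = Some (u * z)"
proof -
  assume u: "u \<noteq> 0"
  have s2: "csqrt u * csqrt u = u" using power2_csqrt[of u] by (simp add: power2_eq_square)
  then have "csqrt u \<noteq> 0" using u by auto
  then show ?thesis using s2 by (simp add: smul_def mobius_Some field_simps)
qed

lemma smul_None: "smul u None = None"
  by (simp add: smul_def mobius_None)

lemma smul_Mob: "u \<noteq> 0 \<Longrightarrow> smul u \<in> Mob"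
proof -
  assume u: "u \<noteq> 0"
  have s2: "csqrt u * csqrt u = u" using power2_csqrt[of u] by (simp add: power2_eq_square)
  then have "csqrt u \<noteq> 0" using u by auto
  then show ?thesis unfolding Mob_def smul_def
    by (intro CollectI exI[of _ "csqrt u"] exI[of _ 0] exI[of _ "inverse (csqrt u)"] conjI) simp_all
qed

definition tr :: "complex \<Rightarrow> sphere \<Rightarrow> sphere" where
  "tr c = mobius 1 c 0 1"

lemma tr_Some: "tr c (Some z) = Some (z + c)" by (simp add: tr_def mobius_Some)
lemma tr_None: "tr c None = None" by (simp add: tr_def mobius_None)
lemma tr_Mob: "tr c \<in> Mob" unfolding Mob_def tr_def by force

definition J :: "sphere \<Rightarrow> sphere" where "J = mobius 0 (-1) 1 0"
lemma J_Mob: "J \<in> Mob" unfolding Mob_def J_def by force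
lemma J_Some: "J (Some w) = (if w = 0 then None else Some (- inverse w))"
  by (simp add: J_def mobius_Some divide_inverse)
lemma J_None: "J None = Some 0" by (simp add: J_def mobius_None)

lemma deriv_G2:
  assumes "diff_subgroup G" "g \<in> G2 G"
  shows "\<exists>L. (local_rep g True True has_derivative L) (at 0) \<and> real_det L > 0"
proof -
  have gD: "g \<in> Diff1_plus" and g0: "g (Some 0) = Some 0"
    using assms unfolding diff_subgroup_def G2_def by auto
  have dom: "0 \<in> local_dom g True True"
    using g0 by (simp add: local_dom_def param_def)
  from gD have "C1_on (local_dom g True True) (local_rep g True True)"
    unfolding Diff1_plus_def sphere_C1_def by blast
  then obtain D :: "complex \<Rightarrow> (complex \<Rightarrow>\<^sub>L complex)" where
    "\<forall>w\<in>local_dom g True True. (local_rep g True True has_derivative blinfun_apply (D w)) (at w)"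
    unfolding C1_on_def by blast
  with dom have d: "(local_rep g True True has_derivative blinfun_apply (D 0)) (at 0)" by blast
  moreover have "real_det (blinfun_apply (D 0)) > 0"
    using gD d dom unfolding Diff1_plus_def by blast
  ultimately show ?thesis by blast
qed

lemma lin_decomp:
  assumes "bounded_linear L"
  shows "L h = (L 1 - \<i> * L \<i>) / 2 * h + (L 1 + \<i> * L \<i>) / 2 * cnj h"
proof -
  interpret bounded_linear L by fact
  have "h = Re h *\<^sub>R 1 + Im h *\<^sub>R \<i>" by (simp add: complex_eq_iff)
  then have "L h = Re h *\<^sub>R L 1 + Im h *\<^sub>R L \<i>" by (metis add scale)
  then show ?thesis by (simp add: complex_eq_iff scaleR_conv_of_real algebra_simps field_simps)
qed

lemma det_decomp:
  "real_det L = (cmod ((L 1 - \<i> * L \<i>) / 2))^2 - (cmod ((L 1 + \<i> * L \<i>) / 2))^2"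
  unfolding real_det_def cmod_power2 by (simp add: power2_eq_square field_simps)


lemma diag_choice:
  assumes ab: "cmod \<beta> < cmod \<alpha>" and b0: "\<beta> \<noteq> 0"
  shows "\<exists>u v l. u \<noteq> 0 \<and> v \<noteq> 0 \<and> 0 < l \<and> l < 1 \<and>
     (\<forall>h. u * (\<alpha> * (v * h) + \<beta> * cnj (v * h)) = Complex (l * Re h) (Im h / l))"
proof -
  have a0: "\<alpha> \<noteq> 0" using ab b0 by auto
  have nb: "cmod \<beta> > 0" using b0 by simp
  define r where "r = cmod \<alpha> / cmod \<beta>"
  have r1: "r > 1" using ab nb by (simp add: r_def)
  define l where "l = sqrt ((r-1)/(r+1))"
  have l2: "l^2 = (r-1)/(r+1)" using r1 by (simp add: l_def)
  have l0: "l > 0" using r1 by (simp add: l_def)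
  have "(r-1)/(r+1) < 1" using r1 by simp
  then have l1: "l < 1" unfolding l_def by (metis real_sqrt_lt_1_iff)
  define A where "A = (l + 1/l)/2"
  define B where "B = (l - 1/l)/2"
  have l2': "l*l*(r+1) = r-1" using l2 r1 by (simp add: power2_eq_square field_simps)
  have AB: "A = - r * B"
  proof -
    have "2*l*(A + r*B) = l*l*(1+r) + 1 - r" using l0 by (simp add: A_def B_def field_simps)
    also have "\<dots> = 0" using l2' by (simp add: algebra_simps)
    finally show ?thesis using l0 by simp
  qed
  define v where "v = csqrt (- of_real r * \<beta> / \<alpha>)"
  have v2: "v * v = - of_real r * \<beta> / \<alpha>" using power2_csqrt unfolding v_def power2_eq_square by metis
  have "cmod v * cmod v = cmod (v * v)" by (simp add: norm_mult)
  also have "\<dots> = r * cmod \<beta> / cmod \<alpha>" using r1 by (simp add: v2 norm_mult norm_divide)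
  also have "\<dots> = 1" using nb a0 by (simp add: r_def)
  finally have nv: "cmod v * cmod v = 1" .
  have v0: "v \<noteq> 0" using nv by auto
  have cv: "cnj v = inverse v"
  proof -
    have "v * cnj v = of_real (cmod v * cmod v)" using complex_norm_square[of v, symmetric]
      by (simp add: power2_eq_square)
    then have "v * cnj v = 1" using nv by simp
    then show ?thesis using v0 by (simp add: field_simps)
  qed
  define u where "u = of_real A / (\<alpha> * v)"
  have A0: "A > 0" using l0 by (simp add: A_def add_pos_pos)
  have u0: "u \<noteq> 0" using A0 a0 v0 by (simp add: u_def)
  have e1: "u * \<alpha> * v = of_real A" using a0 v0 by (simp add: u_def)
  have e2: "u * \<beta> * cnj v = of_real B"
  proof -
    have "u * \<beta> * cnj v = of_real A * \<beta> / (\<alpha> * (v * v))" using a0 v0 by (simp add: u_def cv field_simps)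
    also have "\<dots> = of_real A * \<beta> / (- of_real r * \<beta>)" using a0 by (simp add: v2)
    also have "\<dots> = of_real (- A / r)" using b0 r1 by (simp add: field_simps)
    also have "\<dots> = of_real B" using AB r1 by simp
    finally show ?thesis .
  qed
  have "\<forall>h. u * (\<alpha> * (v * h) + \<beta> * cnj (v * h)) = Complex (l * Re h) (Im h / l)"
  proof
    fix h
    have "u * (\<alpha> * (v * h) + \<beta> * cnj (v * h)) = (u * \<alpha> * v) * h + (u * \<beta> * cnj v) * cnj h"
      by (simp add: algebra_simps)
    also have "\<dots> = of_real A * h + of_real B * cnj h" by (simp add: e1 e2)
    also have "\<dots> = Complex (l * Re h) (Im h / l)" using l0
      by (simp add: complex_eq_iff A_def B_def field_simps)
    finally show "u * (\<alpha> * (v * h) + \<beta> * cnj (v * h)) = Complex (l * Re h) (Im h / l)" .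
  qed
  then show ?thesis using u0 v0 l0 l1 by blast
qed


lemma G_comp: "diff_subgroup G \<Longrightarrow> f \<in> G \<Longrightarrow> g \<in> G \<Longrightarrow> f \<circ> g \<in> G"
  unfolding diff_subgroup_def by blast

lemma step2:
  assumes G: "diff_subgroup G" and M: "Mob \<subseteq> G" and g: "g \<in> G2 G"
    and d: "(local_rep g True True has_derivative L) (at 0)" and det: "real_det L > 0"
    and nc: "\<not> (\<forall>h. L h = L 1 * h)"
  shows "\<exists>g\<in>G2 G. \<exists>l::real. 0 < l \<and> l < 1 \<and>
           (local_rep g True True has_derivative
              (\<lambda>h. Complex (l * Re h) (Im h / l))) (at 0)"
proof -
  define \<alpha> where "\<alpha> = (L 1 - \<i> * L \<i>) / 2"
  define \<beta> where "\<beta> = (L 1 + \<i> * L \<i>) / 2"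
  have bl: "bounded_linear L" using d by (rule has_derivative_bounded_linear)
  have Lh: "\<And>h. L h = \<alpha> * h + \<beta> * cnj h" unfolding \<alpha>_def \<beta>_def by (rule lin_decomp[OF bl])
  have b0: "\<beta> \<noteq> 0"
  proof
    assume "\<beta> = 0"
    then have "\<And>h. L h = \<alpha> * h" using Lh by simp
    then show False using nc by (metis mult.right_neutral)
  qed
  have "(cmod \<beta>)^2 < (cmod \<alpha>)^2" using det det_decomp[of L] unfolding \<alpha>_def \<beta>_def by simp
  then have ab: "cmod \<beta> < cmod \<alpha>" by (simp add: power_less_imp_less_base)
  obtain u v l where u0: "u \<noteq> 0" and v0: "v \<noteq> 0" and l: "0 < l" "l < 1"
    and eq: "\<And>h. u * (\<alpha> * (v * h) + \<beta> * cnj (v * h)) = Complex (l * Re h) (Im h / l)"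
    using diag_choice[OF ab b0] by blast
  define g' where "g' = smul u \<circ> g \<circ> smul v"
  have gG: "g \<in> G" and g0: "g (Some 0) = Some 0" and gi: "g None = None" using g unfolding G2_def by auto
  have "g' \<in> G" unfolding g'_def
    using G_comp[OF G G_comp[OF G _ gG]] smul_Mob[OF u0] smul_Mob[OF v0] M by blast
  moreover have "g' (Some 0) = Some 0" "g' None = None"
    by (simp_all add: g'_def smul_Some smul_None u0 v0 g0 gi)
  ultimately have g'G2: "g' \<in> G2 G" unfolding G2_def by blast
  have rep: "local_rep g' True True = (\<lambda>w. u * local_rep g True True (v * w))"
  proof
    fix w
    show "local_rep g' True True w = u * local_rep g True True (v * w)"
      by (simp add: rep_TT g'_def smul_Some smul_None u0 v0 split: option.splits)
  qed
  have d1: "((\<lambda>w. v * w) has_derivative (\<lambda>h. v * h)) (at 0)"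
    by (rule has_derivative_mult_right[OF has_derivative_ident])
  have d0: "(local_rep g True True has_derivative L) (at ((\<lambda>w. v * w) 0))" using d by simp
  have "((\<lambda>w. u * local_rep g True True (v * w)) has_derivative (\<lambda>h. u * L (v * h))) (at 0)"
    by (rule has_derivative_mult_right[OF has_derivative_compose[OF d1 d0]])
  moreover have "(\<lambda>h. u * L (v * h)) = (\<lambda>h. Complex (l * Re h) (Im h / l))"
    using eq by (simp add: Lh)
  ultimately have "(local_rep g' True True has_derivative (\<lambda>h. Complex (l * Re h) (Im h / l))) (at 0)"
    by (simp add: rep)
  then show ?thesis using g'G2 l by blast
qed



lemma G_Diff: "diff_subgroup G \<Longrightarrow> f \<in> G \<Longrightarrow> f \<in> Diff1_plus"
  unfolding diff_subgroup_def by blast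

lemma Diff_bij: "f \<in> Diff1_plus \<Longrightarrow> bij f"
  unfolding Diff1_plus_def by simp

lemma step1:
  assumes G: "diff_subgroup G" and M: "Mob \<subset> G"
    and H: "\<forall>g\<in>G2 G. \<forall>L. (local_rep g True True has_derivative L) (at 0) \<longrightarrow> (\<forall>h. L h = L 1 * h)"
  shows False
proof -
  have dH: "\<exists>c. (local_rep g True True has_field_derivative c) (at 0) \<and> c \<noteq> 0" if gG: "g \<in> G2 G" for g
  proof -
    obtain L where d: "(local_rep g True True has_derivative L) (at 0)" and det: "real_det L > 0"
      using deriv_G2[OF G gG] by blast
    have hyp: "\<forall>h. L h = L 1 * h" using H gG d by blast
    define c where "c = L 1"
    have Le: "L = (*) c"
    proof
      fix h show "L h = c * h" unfolding c_def by (rule spec[OF hyp])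
    qed
    have "real_det L = Re c * Re c + Im c * Im c"
      unfolding Le by (simp add: real_det_def)
    with det have "c \<noteq> 0" by auto
    moreover have "(local_rep g True True has_field_derivative c) (at 0)"
      unfolding has_field_derivative_def using d unfolding Le .
    ultimately show ?thesis by blast
  qed
  obtain f where fG: "f \<in> G" and fM: "f \<notin> Mob" using M by blast
  have "bij f" using Diff_bij[OF G_Diff[OF G fG]] .
  then have injf: "inj f" by (rule bij_is_inj)
  have "f None \<noteq> f (Some 0)"
  proof
    assume "f None = f (Some 0)"
    then have "None = (Some 0 :: sphere)" using injf by (rule injD[rotated])
    then show False by simp
  qed
  then obtain T where TM: "T \<in> Mob" and T1: "T (f None) = None" and T2: "T (f (Some 0)) = Some 0"
    using Mob_normalize by blast
  define f' where "f' = T \<circ> f"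
  have f'G: "f' \<in> G" unfolding f'_def using G_comp[OF G _ fG] TM M by blast
  have f'M: "f' \<notin> Mob" using Mob_cancel[OF TM] fM unfolding f'_def by blast
  have "bij f'" using Diff_bij[OF G_Diff[OF G f'G]] .
  then have injf': "inj f'" by (rule bij_is_inj)
  have f'N: "f' None = None" and f'0: "f' (Some 0) = Some 0" using T1 T2 by (simp_all add: f'_def)
  have nN: "f' (Some z) \<noteq> None" for z
  proof
    assume "f' (Some z) = None"
    then have "f' (Some z) = f' None" using f'N by simp
    then have "Some z = None" using injf' by (rule injD[rotated])
    then show False by simp
  qed
  define F where "F z = the (f' (Some z))" for z
  have fF: "f' (Some z) = Some (F z)" for z using nN[of z] by (auto simp: F_def)
  have F0: "F 0 = 0" using fF[of 0] f'0 by simp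
  have injF: "inj F"
  proof (rule injI)
    fix x y assume "F x = F y"
    then have "f' (Some x) = f' (Some y)" by (simp add: fF)
    then show "x = y" using injf' by (auto dest: injD)
  qed
  have diffF: "F field_differentiable (at z0)" for z0
  proof -
    define g where "g = tr (- F z0) \<circ> f' \<circ> tr z0"
    have "g \<in> G" unfolding g_def using G_comp[OF G G_comp[OF G _ f'G]] tr_Mob M by blast
    moreover have "g (Some 0) = Some 0" "g None = None"
      by (simp_all add: g_def tr_Some tr_None fF f'N)
    ultimately have gG2: "g \<in> G2 G" unfolding G2_def by blast
    have rep: "local_rep g True True = (\<lambda>w. F (w + z0) - F z0)"
      by (rule ext) (simp add: rep_TT g_def tr_Some fF)
    obtain c where "((\<lambda>w. F (w + z0) - F z0) has_field_derivative c) (at 0)"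
      using dH[OF gG2] rep by auto
    then have "((\<lambda>w. F (w + z0) - F z0 + F z0) has_field_derivative c + 0) (at 0)"
      by (intro DERIV_add DERIV_const)
    then have "((\<lambda>w. F (w + z0)) has_field_derivative c) (at 0)" by simp
    then have "(F has_field_derivative c) (at (0 + z0))" using DERIV_shift by blast
    then show ?thesis unfolding field_differentiable_def by auto
  qed
  have holF: "F holomorphic_on UNIV"
    unfolding holomorphic_on_def using diffF by (simp add: field_differentiable_at_within)
  define Hf where "Hf w = - inverse (F (- inverse w))" for w
  define g2 where "g2 = J \<circ> f' \<circ> J"
  have "g2 \<in> G" unfolding g2_def using G_comp[OF G G_comp[OF G _ f'G]] J_Mob M by blast
  moreover have "g2 (Some 0) = Some 0" "g2 None = None"
    by (simp_all add: g2_def J_Some J_None fF f'N F0)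
  ultimately have g2G2: "g2 \<in> G2 G" unfolding G2_def by blast
  have rep2: "local_rep g2 True True = Hf"
  proof
    fix w
    show "local_rep g2 True True w = Hf w"
    proof (cases "w = 0")
      case True
      then show ?thesis by (simp add: rep_TT g2_def J_Some J_None f'N Hf_def F0)
    next
      case False
      have "F (- inverse w) \<noteq> 0"
      proof
        assume "F (- inverse w) = 0"
        then have "F (- inverse w) = F 0" using F0 by simp
        then have "- inverse w = 0" using injF by (rule injD[rotated])
        then show False using False by simp
      qed
      then show ?thesis using False by (simp add: rep_TT g2_def J_Some fF Hf_def)
    qed
  qed
  obtain c where dc: "(Hf has_field_derivative c) (at 0)" and c0: "c \<noteq> 0"
    using dH[OF g2G2] rep2 by auto
  have Hf0: "Hf 0 = 0" by (simp add: Hf_def F0)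
  have "((\<lambda>y. (Hf y - Hf 0) / (y - 0)) \<longlongrightarrow> c) (at 0)"
    using dc by (simp add: has_field_derivative_iff)
  then have lim: "((\<lambda>y. Hf y / y) \<longlongrightarrow> c) (at 0)" by (simp add: Hf0)
  have "cmod c / 2 > 0" using c0 by simp
  from tendstoD[OF lim this] obtain d where d0: "d > 0"
    and dd: "\<And>y. y \<noteq> 0 \<Longrightarrow> dist y 0 < d \<Longrightarrow> dist (Hf y / y) c < cmod c / 2"
    unfolding eventually_at by blast
  have lower: "cmod (Hf y) \<ge> cmod c / 2 * cmod y" if "y \<noteq> 0" "cmod y < d" for y
  proof -
    have "dist (Hf y / y) c < cmod c / 2" using dd that by simp
    then have "cmod (Hf y / y) \<ge> cmod c / 2" using norm_triangle_ineq2[of c "Hf y / y"]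
      by (simp add: dist_norm norm_minus_commute)
    then have "cmod (Hf y / y) * cmod y \<ge> cmod c / 2 * cmod y" by (rule mult_right_mono) simp
    then show ?thesis using that by (simp add: norm_divide)
  qed
  have bound: "cmod (F z) \<le> (2 / cmod c) * cmod z ^ 1" if zd: "2 / d \<le> cmod z" for z
  proof -
    have d2: "2 / d > 0" using d0 by simp
    then have zpos: "cmod z > 0" using zd by linarith
    then have z0: "z \<noteq> 0" by auto
    define y where "y = - inverse z"
    have y0: "y \<noteq> 0" using z0 by (simp add: y_def)
    have ny: "cmod y = inverse (cmod z)" by (simp add: y_def norm_inverse)
    have "inverse (cmod z) \<le> inverse (2 / d)" by (rule le_imp_inverse_le[OF zd d2])
    also have "inverse (2 / d) = d / 2" by simp
    finally have "cmod y < d" using d0 unfolding ny by linarith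
    from lower[OF y0 this] have low: "cmod c / 2 * inverse (cmod z) \<le> cmod (Hf y)" by (simp only: ny)
    have Hy: "Hf y = - inverse (F z)" by (simp add: Hf_def y_def)
    define k where "k = cmod c / 2"
    have k0: "k > 0" using c0 by (simp add: k_def)
    have kz: "k * inverse (cmod z) > 0" using k0 zpos by simp
    have low2: "k * inverse (cmod z) \<le> inverse (cmod (F z))"
      using low Hy by (simp add: k_def norm_inverse)
    have "inverse (inverse (cmod (F z))) \<le> inverse (k * inverse (cmod z))"
      by (rule le_imp_inverse_le[OF low2 kz])
    then have "cmod (F z) \<le> cmod z / k" by (simp add: divide_inverse mult.commute)
    also have "cmod z / k = (2 / cmod c) * cmod z ^ 1" by (simp add: k_def)
    finally show ?thesis .
  qed
  have lin: "F \<xi> = F 0 + deriv F 0 * \<xi>" for \<xi>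
    using Liouville_polynomial[OF holF bound, where \<xi>=\<xi>] by simp
  define a where "a = deriv F 0"
  have Fa: "F z = a * z" for z using lin[of z] unfolding F0 a_def[symmetric] by simp
  have a0: "a \<noteq> 0"
  proof
    assume "a = 0"
    then have "F 1 = F 0" using Fa by simp
    then have "(1::complex) = 0" using injF by (rule injD[rotated])
    then show False by simp
  qed
  have "f' = smul a"
  proof
    fix x show "f' x = smul a x"
      by (cases x) (simp_all add: f'N smul_None smul_Some a0 fF Fa)
  qed
  then show False using f'M smul_Mob[OF a0] by simp
qed


theorem mainTheorem5:
  fixes G :: "(sphere \<Rightarrow> sphere) set"
  assumes "diff_subgroup G"
    and "Mob \<subset> G"
  shows "\<exists>g\<in>G2 G. \<exists>l::real. 0 < l \<and> l < 1 \<and>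
           (local_rep g True True has_derivative
              (\<lambda>h. Complex (l * Re h) (Im h / l))) (at 0)"
proof (rule ccontr)
  assume nt: "\<not> ?thesis"
  have "\<forall>g\<in>G2 G. \<forall>L. (local_rep g True True has_derivative L) (at 0) \<longrightarrow> (\<forall>h. L h = L 1 * h)"
  proof (rule ballI, rule allI, rule impI)
    fix g L assume g: "g \<in> G2 G" and d: "(local_rep g True True has_derivative L) (at 0)"
    show "\<forall>h. L h = L 1 * h"
    proof (rule ccontr)
      assume nc: "\<not> (\<forall>h. L h = L 1 * h)"
      obtain L' where d': "(local_rep g True True has_derivative L') (at 0)" and det: "real_det L' > 0"
        using deriv_G2[OF assms(1) g] by blast
      have "L' = L" using has_derivative_unique[OF d' d] .
      then have "real_det L > 0" using det by simp
      have "Mob \<subseteq> G" using assms(2) by blast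
      from step2[OF assms(1) this g d \<open>real_det L > 0\<close> nc] nt show False by blast
    qed
  qed
  then show False using step1[OF assms] by blast
qed

end
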